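(* Let $\varphi=\sum_{n=-\infty}^\infty\varphi_nz^n\in L^\infty(\mathbb{T})$ and let $C$ be a conjugation on $H^2(\mathbb{D})$ with canonical factorization $C=UJ_{H^2(\mathbb{D})}$ ($U$ unitary). Put $u_{i,j}:=\langle Uz^i,z^j\rangle=\langle Cz^i,z^j\rangle$ for $i,j\in\mathbb{Z}_+$. The following are equivalent: (1) $T_\varphi$ is $C$-symmetric; (2) $\varphi_{m-n}=\langle U^*T_\varphi Uz^m,z^n\rangle$ for all $m,n\in\mathbb{Z}_+$; (3) $\varphi_{m-n}=\sum_{i,j=0}^\infty u_{m,j}\,\varphi_{i-j}\,\overline{u_{i,n}}$ for all $m,n\in\mathbb{Z}_+$.
   Context: A conjugation is an anti-linear, involutive, isometric map; $T$ is $C$-symmetric if $CT^*C=T$. $H^2(\mathbb{D})$ is the Hardy space of the disc with orthonormal basis $\{z^n\}_{n\in\mathbb{Z}_+}$, inner product linear in the first entry; $T_\varphi f=P_{H^2(\mathbb{D})}(\varphi f)$; $J_{H^2(\mathbb{D})}(\sum a_nz^n)=\sum\bar a_nz^n$; the canonical factorization of $C$ is the unique factorization $C=UJ_{H^2(\mathbb{D})}$ with $U$ unitary. *)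

theory Defs
  imports "HOL-Analysis.Analysis"
begin

text \<open>The Hardy space H^2(D) is represented by its Taylor coefficient sequences:
  f = sum a_n z^n is identified with a :: nat => complex, square summable.\<close>

definition H2 :: "(nat \<Rightarrow> complex) set" where
  "H2 = {a. summable (\<lambda>n. (cmod (a n))\<^sup>2)}"

definition h2_inner :: "(nat \<Rightarrow> complex) \<Rightarrow> (nat \<Rightarrow> complex) \<Rightarrow> complex" where
  "h2_inner f g = (\<Sum>n. f n * cnj (g n))"

definition h2_norm :: "(nat \<Rightarrow> complex) \<Rightarrow> real" where
  "h2_norm f = sqrt (\<Sum>n. (cmod (f n))\<^sup>2)"

definition zmono :: "nat \<Rightarrow> nat \<Rightarrow> complex" where
  "zmono k = (\<lambda>n. if n = k then 1 else 0)"

definition J_H2 :: "(nat \<Rightarrow> complex) \<Rightarrow> nat \<Rightarrow> complex" where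
  "J_H2 f = (\<lambda>n. cnj (f n))"

definition conjugation :: "((nat \<Rightarrow> complex) \<Rightarrow> nat \<Rightarrow> complex) \<Rightarrow> bool" where
  "conjugation C \<longleftrightarrow>
     (\<forall>f\<in>H2. C f \<in> H2) \<and>
     (\<forall>f\<in>H2. \<forall>g\<in>H2. \<forall>a b. C (\<lambda>n. a * f n + b * g n) = (\<lambda>n. cnj a * C f n + cnj b * C g n)) \<and>
     (\<forall>f\<in>H2. C (C f) = f) \<and>
     (\<forall>f\<in>H2. h2_norm (C f) = h2_norm f)"

definition unitary_H2 :: "((nat \<Rightarrow> complex) \<Rightarrow> nat \<Rightarrow> complex) \<Rightarrow> bool" where
  "unitary_H2 U \<longleftrightarrow>
     (\<forall>f\<in>H2. U f \<in> H2) \<and>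
     (\<forall>f\<in>H2. \<forall>g\<in>H2. \<forall>a b. U (\<lambda>n. a * f n + b * g n) = (\<lambda>n. a * U f n + b * U g n)) \<and>
     (\<forall>f\<in>H2. h2_norm (U f) = h2_norm f) \<and>
     (\<forall>g\<in>H2. \<exists>f\<in>H2. U f = g)"

text \<open>Hilbert space adjoint on H^2 (defined pointwise on H^2 via the Riesz
  representative; values outside H^2 are irrelevant and set to 0).\<close>
definition adj_H2 :: "((nat \<Rightarrow> complex) \<Rightarrow> nat \<Rightarrow> complex) \<Rightarrow> (nat \<Rightarrow> complex) \<Rightarrow> nat \<Rightarrow> complex" where
  "adj_H2 T g = (if g \<in> H2 then (THE h. h \<in> H2 \<and> (\<forall>f\<in>H2. h2_inner (T f) g = h2_inner f h))
                 else (\<lambda>_. 0))"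

definition C_symmetric :: "((nat \<Rightarrow> complex) \<Rightarrow> nat \<Rightarrow> complex) \<Rightarrow> ((nat \<Rightarrow> complex) \<Rightarrow> nat \<Rightarrow> complex) \<Rightarrow> bool" where
  "C_symmetric C T \<longleftrightarrow> (\<forall>f\<in>H2. C (adj_H2 T (C f)) = T f)"

definition Linfty_T :: "(complex \<Rightarrow> complex) \<Rightarrow> bool" where
  "Linfty_T \<phi> \<longleftrightarrow>
     (\<lambda>t. \<phi> (cis t)) \<in> borel_measurable (lebesgue_on {0..2*pi}) \<and>
     (\<exists>B. AE t in lebesgue_on {0..2*pi}. cmod (\<phi> (cis t)) \<le> B)"

definition fourier_coeff :: "(complex \<Rightarrow> complex) \<Rightarrow> int \<Rightarrow> complex" where
  "fourier_coeff \<phi> n =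
     complex_of_real (1 / (2*pi)) *
       integral\<^sup>L (lebesgue_on {0..2*pi}) (\<lambda>t. \<phi> (cis t) * cis (- (of_int n * t)))"

text \<open>Toeplitz operator T_phi f = P_{H^2}(phi f): the n-th Taylor coefficient of
  P(phi f) is the n-th Fourier coefficient of phi f, i.e. sum_m phi_{n-m} f_m.\<close>
definition toeplitz :: "(complex \<Rightarrow> complex) \<Rightarrow> (nat \<Rightarrow> complex) \<Rightarrow> nat \<Rightarrow> complex" where
  "toeplitz \<phi> f = (\<lambda>n. \<Sum>m. fourier_coeff \<phi> (int n - int m) * f m)"

end

theory Submission
  imports Defs
begin


abbreviation S2 :: "(nat \<Rightarrow> complex) \<Rightarrow> real" where
  "S2 f \<equiv> (\<Sum>n. (cmod (f n))\<^sup>2)"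

lemma H2_iff: "f \<in> H2 \<longleftrightarrow> summable (\<lambda>n. (cmod (f n))\<^sup>2)"
  by (simp add: H2_def)

lemma suminf_cnj: "summable f \<Longrightarrow> cnj (suminf f) = (\<Sum>n. cnj (f n))"
  by (metis sums_cnj summable_sums sums_unique)

lemma prod_le_sq: "cmod (x * y) \<le> ((cmod x)\<^sup>2 + (cmod y)\<^sup>2) / 2"
proof -
  have "0 \<le> (cmod x - cmod y)\<^sup>2" by simp
  then show ?thesis by (simp add: norm_mult power2_eq_square algebra_simps)
qed

lemma summable_prod_sq:
  assumes "summable (\<lambda>n. (cmod (x n))\<^sup>2)" "summable (\<lambda>n. (cmod (y n))\<^sup>2)"
  shows "summable (\<lambda>n. cmod (x n * y n))"
proof (rule summable_comparison_test'[where N=0])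
  show "summable (\<lambda>n. ((cmod (x n))\<^sup>2 + (cmod (y n))\<^sup>2) / 2)"
    using assms by (intro summable_divide summable_add)
  show "norm (cmod (x n * y n)) \<le> ((cmod (x n))\<^sup>2 + (cmod (y n))\<^sup>2) / 2" for n
    using prod_le_sq by simp
qed

lemma summable_prod_sq':
  assumes "summable (\<lambda>n. (cmod (x n))\<^sup>2)" "summable (\<lambda>n. (cmod (y n))\<^sup>2)"
  shows "summable (\<lambda>n. x n * y n)"
  by (rule summable_norm_cancel) (simp add: summable_prod_sq[OF assms])

lemma sum_sq_le: "(cmod (x + y))\<^sup>2 \<le> 2 * (cmod x)\<^sup>2 + 2 * (cmod y)\<^sup>2"
proof -
  have "cmod (x + y) \<le> cmod x + cmod y" by (rule norm_triangle_ineq)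
  then have "(cmod (x + y))\<^sup>2 \<le> (cmod x + cmod y)\<^sup>2" by (simp add: power_mono)
  also have "\<dots> \<le> 2 * (cmod x)\<^sup>2 + 2 * (cmod y)\<^sup>2"
  proof -
    have "0 \<le> (cmod x - cmod y)\<^sup>2" by simp
    then show ?thesis by (simp add: power2_eq_square algebra_simps)
  qed
  finally show ?thesis .
qed

lemma H2_lin: "f \<in> H2 \<Longrightarrow> g \<in> H2 \<Longrightarrow> (\<lambda>n. a * f n + b * g n) \<in> H2"
  unfolding H2_iff
proof (rule summable_comparison_test'[where N=0])
  assume f: "summable (\<lambda>n. (cmod (f n))\<^sup>2)" and g: "summable (\<lambda>n. (cmod (g n))\<^sup>2)"
  show "summable (\<lambda>n. 2 * (cmod a)\<^sup>2 * (cmod (f n))\<^sup>2 + 2 * (cmod b)\<^sup>2 * (cmod (g n))\<^sup>2)"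
    using f g by (intro summable_add summable_mult)
  show "norm ((cmod (a * f n + b * g n))\<^sup>2) \<le> 2 * (cmod a)\<^sup>2 * (cmod (f n))\<^sup>2 + 2 * (cmod b)\<^sup>2 * (cmod (g n))\<^sup>2" for n
    using sum_sq_le[of "a * f n" "b * g n"] by (simp add: norm_mult power_mult_distrib)
qed

lemma H2_dom: "f \<in> H2 \<Longrightarrow> (\<And>n. cmod (g n) \<le> cmod (f n)) \<Longrightarrow> g \<in> H2"
  unfolding H2_iff
  by (rule summable_comparison_test'[where N=0]) (auto intro: power_mono)

lemma zmono_H2: "zmono k \<in> H2"
proof -
  have "summable (\<lambda>n. (cmod (zmono k n))\<^sup>2)"
    by (rule summable_finite[of "{k}"]) (auto simp: zmono_def)
  then show ?thesis by (simp add: H2_iff)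
qed

lemma J_H2_in: "f \<in> H2 \<Longrightarrow> J_H2 f \<in> H2"
  by (simp add: H2_iff J_H2_def)

lemma J_zmono: "J_H2 (zmono k) = zmono k"
  by (auto simp: J_H2_def zmono_def)

lemma inner_summable: "f \<in> H2 \<Longrightarrow> g \<in> H2 \<Longrightarrow> summable (\<lambda>n. f n * cnj (g n))"
  by (rule summable_prod_sq') (auto simp: H2_iff)

lemma inner_zmono_right: "h2_inner f (zmono k) = f k"
proof -
  have "(\<Sum>n. f n * cnj (zmono k n)) = (\<Sum>n\<in>{k}. f n * cnj (zmono k n))"
    by (rule suminf_finite) (auto simp: zmono_def)
  then show ?thesis by (simp add: h2_inner_def zmono_def)
qed

lemma inner_zmono_left: "h2_inner (zmono k) g = cnj (g k)"
proof -
  have "(\<Sum>n. zmono k n * cnj (g n)) = (\<Sum>n\<in>{k}. zmono k n * cnj (g n))"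
    by (rule suminf_finite) (auto simp: zmono_def)
  then show ?thesis by (simp add: h2_inner_def zmono_def)
qed

lemma inner_cnj: "f \<in> H2 \<Longrightarrow> g \<in> H2 \<Longrightarrow> h2_inner g f = cnj (h2_inner f g)"
  unfolding h2_inner_def
  by (subst suminf_cnj[OF inner_summable]) (auto simp: mult.commute)

lemma J_inner: "h2_inner (J_H2 p) (J_H2 q) = h2_inner q p"
  by (simp add: h2_inner_def J_H2_def mult.commute)

lemma norm_sq: "f \<in> H2 \<Longrightarrow> (h2_norm f)\<^sup>2 = S2 f"
  by (simp add: h2_norm_def H2_iff suminf_nonneg)

lemma polar_pt: "4 * (x * cnj y) = complex_of_real ((cmod (x + 1 * y))\<^sup>2) - complex_of_real ((cmod (x + (-1) * y))\<^sup>2)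
   + \<i> * complex_of_real ((cmod (x + \<i> * y))\<^sup>2) - \<i> * complex_of_real ((cmod (x + (-\<i>) * y))\<^sup>2)"
  by (simp only: cmod_power2) (simp add: complex_eq_iff algebra_simps power2_eq_square)

lemma polar:
  assumes f: "f \<in> H2" and g: "g \<in> H2"
  shows "4 * h2_inner f g = complex_of_real (S2 (\<lambda>n. f n + 1 * g n)) - complex_of_real (S2 (\<lambda>n. f n + (-1) * g n))
   + \<i> * complex_of_real (S2 (\<lambda>n. f n + \<i> * g n)) - \<i> * complex_of_real (S2 (\<lambda>n. f n + (-\<i>) * g n))"
proof -
  have s: "summable (\<lambda>n. complex_of_real ((cmod (f n + b * g n))\<^sup>2))" for b
    using H2_lin[OF f g, of 1 b] by (subst summable_complex_of_real) (simp add: H2_iff)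
  have e: "complex_of_real (S2 (\<lambda>n. f n + b * g n)) = (\<Sum>n. complex_of_real ((cmod (f n + b * g n))\<^sup>2))" for b
    using H2_lin[OF f g, of 1 b] by (subst suminf_of_real) (auto simp: H2_iff)
  have "4 * h2_inner f g = (\<Sum>n. 4 * (f n * cnj (g n)))"
    unfolding h2_inner_def by (rule suminf_mult[symmetric, OF inner_summable[OF f g]])
  also have "\<dots> = (\<Sum>n. complex_of_real ((cmod (f n + 1 * g n))\<^sup>2) - complex_of_real ((cmod (f n + (-1) * g n))\<^sup>2)
   + \<i> * complex_of_real ((cmod (f n + \<i> * g n))\<^sup>2) - \<i> * complex_of_real ((cmod (f n + (-\<i>) * g n))\<^sup>2))"
    by (subst polar_pt) simp
  also have "\<dots> = (\<Sum>n. complex_of_real ((cmod (f n + 1 * g n))\<^sup>2)) - (\<Sum>n. complex_of_real ((cmod (f n + (-1) * g n))\<^sup>2))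
   + \<i> * (\<Sum>n. complex_of_real ((cmod (f n + \<i> * g n))\<^sup>2)) - \<i> * (\<Sum>n. complex_of_real ((cmod (f n + (-\<i>) * g n))\<^sup>2))"
    by (rule sums_unique[symmetric], intro sums_diff sums_add sums_mult summable_sums s)
  also have "\<dots> = complex_of_real (S2 (\<lambda>n. f n + 1 * g n)) - complex_of_real (S2 (\<lambda>n. f n + (-1) * g n))
   + \<i> * complex_of_real (S2 (\<lambda>n. f n + \<i> * g n)) - \<i> * complex_of_real (S2 (\<lambda>n. f n + (-\<i>) * g n))"
    by (simp only: e)
  finally show ?thesis .
qed

lemma U_lin1:
  assumes U: "unitary_H2 U" and f: "f \<in> H2" and g: "g \<in> H2"
  shows "U (\<lambda>n. f n + b * g n) = (\<lambda>n. U f n + b * U g n)"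
proof -
  have "U (\<lambda>n. 1 * f n + b * g n) = (\<lambda>n. 1 * U f n + b * U g n)"
    using U f g unfolding unitary_H2_def by blast
  then show ?thesis by simp
qed

lemma U_H2: "unitary_H2 U \<Longrightarrow> f \<in> H2 \<Longrightarrow> U f \<in> H2"
  unfolding unitary_H2_def by blast

lemma U_S2:
  assumes U: "unitary_H2 U" and f: "f \<in> H2"
  shows "S2 (U f) = S2 f"
proof -
  have "h2_norm (U f) = h2_norm f" using U f unfolding unitary_H2_def by blast
  then show ?thesis using norm_sq[OF f] norm_sq[OF U_H2[OF U f]] by simp
qed

lemma U_inner:
  assumes U: "unitary_H2 U" and f: "f \<in> H2" and g: "g \<in> H2"
  shows "h2_inner (U f) (U g) = h2_inner f g"
proof -
  have e: "S2 (\<lambda>n. U f n + b * U g n) = S2 (\<lambda>n. f n + b * g n)" for b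
    using U_S2[OF U H2_lin[OF f g, of 1 b]] U_lin1[OF U f g, of b] by simp
  have "4 * h2_inner (U f) (U g) = 4 * h2_inner f g"
    unfolding polar[OF U_H2[OF U f] U_H2[OF U g]] polar[OF f g] e ..
  then show ?thesis by simp
qed

lemma adj_eq:
  assumes g: "g \<in> H2" and h: "h \<in> H2" and P: "\<forall>f\<in>H2. h2_inner (S f) g = h2_inner f h"
  shows "adj_H2 S g = h"
proof -
  have "(THE h. h \<in> H2 \<and> (\<forall>f\<in>H2. h2_inner (S f) g = h2_inner f h)) = h"
  proof (rule the_equality)
    show "h \<in> H2 \<and> (\<forall>f\<in>H2. h2_inner (S f) g = h2_inner f h)" using h P by blast
    fix h' assume h': "h' \<in> H2 \<and> (\<forall>f\<in>H2. h2_inner (S f) g = h2_inner f h')"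
    show "h' = h"
    proof
      fix n
      have "cnj (h' n) = cnj (h n)"
        using h'[THEN conjunct2, rule_format, OF zmono_H2[of n]] P[rule_format, OF zmono_H2[of n]]
        by (simp add: inner_zmono_left)
      then show "h' n = h n" by simp
    qed
  qed
  then show ?thesis using g by (simp add: adj_H2_def)
qed

lemma adj_U:
  assumes U: "unitary_H2 U" and y: "y \<in> H2"
  shows "adj_H2 U y n = h2_inner y (U (zmono n))"
proof -
  obtain f where f: "f \<in> H2" "U f = y" using U y unfolding unitary_H2_def by blast
  have "adj_H2 U y = f"
    by (rule adj_eq[OF y f(1)]) (use U_inner[OF U _ f(1)] f(2) in auto)
  then show ?thesis using U_inner[OF U f(1) zmono_H2[of n]] f by (simp add: inner_zmono_right)
qed




abbreviation mu :: "real measure" where "mu \<equiv> lebesgue_on {0..2*pi}"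

lemma fin_mu: "finite_measure mu"
  by (rule finite_measure_lebesgue_on) auto

lemma cis_meas: "(\<lambda>t. cis (c * t)) \<in> borel_measurable mu"
  by (intro continuous_imp_measurable_on_sets_lebesgue continuous_intros) auto

lemma measure_mu: "measure mu {0..2*pi} = 2*pi"
  by (simp add: measure_restrict_space)

lemma int_cis: "integral\<^sup>L mu (\<lambda>t. cis (of_int j * t)) = (if j = 0 then 2*pi else 0)"
proof (cases "j = 0")
  case True then show ?thesis using measure_mu by (simp add: scaleR_conv_of_real)
next
  case False
  have cont: "continuous_on {0..2*pi} (\<lambda>t. cis (of_int j * t))" by (intro continuous_intros)
  have "integral\<^sup>L mu (\<lambda>t. cis (of_int j * t)) = integral {0..2*pi} (\<lambda>t. cis (of_int j * t))"
    by (rule lebesgue_integral_eq_integral[OF continuous_imp_integrable_real[OF cont]]) auto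
  also have "\<dots> = 0"
  proof -
    have d: "((\<lambda>t. cis (of_int j * t) / (\<i> * of_int j)) has_vector_derivative cis (of_int j * t)) (at t within {0..2*pi})" for t
    proof -
      have "((\<lambda>t. cis (of_int j * t)) has_derivative (\<lambda>h. (of_int j * h) *\<^sub>R (\<i> * cis (of_int j * t)))) (at t within {0..2*pi})"
        by (intro has_derivative_cis derivative_intros)
      then have "((\<lambda>t. cis (of_int j * t) / (\<i> * of_int j)) has_derivative (\<lambda>h. ((of_int j * h) *\<^sub>R (\<i> * cis (of_int j * t))) / (\<i> * of_int j))) (at t within {0..2*pi})"
        by (rule bounded_linear.has_derivative[OF bounded_linear_divide])
      then show ?thesis unfolding has_vector_derivative_def
        by (rule has_derivative_eq_rhs) (use False in \<open>auto simp: fun_eq_iff field_simps scaleR_conv_of_real\<close>)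
    qed
    have "((\<lambda>t. cis (of_int j * t)) has_integral (cis (of_int j * (2*pi)) / (\<i> * of_int j) - cis (of_int j * 0) / (\<i> * of_int j))) {0..2*pi}"
      by (rule fundamental_theorem_of_calculus) (use d in auto)
    moreover have "cis (of_int j * (2*pi)) = 1"
      using cis_multiple_2pi[OF Ints_of_int[of j]] by (simp add: mult.commute)
    ultimately show ?thesis by (simp add: integral_unique)
  qed
  finally show ?thesis using False by simp
qed

definition bm :: "(real \<Rightarrow> complex) \<Rightarrow> bool" where
  "bm g \<longleftrightarrow> g \<in> borel_measurable mu \<and> (\<exists>B. AE t in mu. cmod (g t) \<le> B)"

lemma bm_integrable: "bm g \<Longrightarrow> integrable mu g"
  unfolding bm_def using finite_measure.integrable_const_bound[OF fin_mu] by blast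

lemma bm_normsq: "bm g \<Longrightarrow> integrable mu (\<lambda>t. (cmod (g t))\<^sup>2)"
proof -
  assume "bm g"
  then obtain B where m: "g \<in> borel_measurable mu" and b: "AE t in mu. cmod (g t) \<le> B"
    unfolding bm_def by blast
  show ?thesis
  proof (rule finite_measure.integrable_const_bound[OF fin_mu, where B="B\<^sup>2"])
    show "AE t in mu. norm ((cmod (g t))\<^sup>2) \<le> B\<^sup>2"
      using b by eventually_elim (simp add: power_mono)
    show "(\<lambda>t. (cmod (g t))\<^sup>2) \<in> borel_measurable mu" using m by measurable
  qed
qed

lemma bm_mult: "bm f \<Longrightarrow> bm g \<Longrightarrow> bm (\<lambda>t. f t * g t)"
proof -
  assume "bm f" "bm g"
  then obtain B1 B2 where m: "f \<in> borel_measurable mu" "g \<in> borel_measurable mu"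
    and b: "AE t in mu. cmod (f t) \<le> B1" "AE t in mu. cmod (g t) \<le> B2"
    unfolding bm_def by blast
  have "AE t in mu. cmod (f t * g t) \<le> B1 * B2"
    using b(1) b(2) by eventually_elim (simp add: norm_mult mult_mono')
  moreover have "(\<lambda>t. f t * g t) \<in> borel_measurable mu" using m by measurable
  ultimately show ?thesis unfolding bm_def by blast
qed

lemma bm_add: "bm f \<Longrightarrow> bm g \<Longrightarrow> bm (\<lambda>t. f t + g t)"
proof -
  assume "bm f" "bm g"
  then obtain B1 B2 where m: "f \<in> borel_measurable mu" "g \<in> borel_measurable mu"
    and b: "AE t in mu. cmod (f t) \<le> B1" "AE t in mu. cmod (g t) \<le> B2"
    unfolding bm_def by blast
  have "AE t in mu. cmod (f t + g t) \<le> B1 + B2"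
    using b(1) b(2) by eventually_elim (meson add_mono norm_triangle_ineq order_trans)
  moreover have "(\<lambda>t. f t + g t) \<in> borel_measurable mu" using m by measurable
  ultimately show ?thesis unfolding bm_def by blast
qed

lemma bm_const: "bm (\<lambda>t. c)"
  unfolding bm_def by auto

lemma bm_cis: "bm (\<lambda>t. cis (c * t))"
  unfolding bm_def using cis_meas by auto

lemma bm_cnj: "bm f \<Longrightarrow> bm (\<lambda>t. cnj (f t))"
proof -
  assume "bm f"
  then obtain B where m: "f \<in> borel_measurable mu" and b: "AE t in mu. cmod (f t) \<le> B"
    unfolding bm_def by blast
  have "(\<lambda>t. cnj (f t)) \<in> borel_measurable mu"
    using measurable_compose[OF m borel_measurable_continuous_onI[OF continuous_on_cnj[OF continuous_on_id]]]
    by (simp add: o_def)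
  then show ?thesis using b unfolding bm_def by auto
qed

lemma bm_diff: "bm f \<Longrightarrow> bm g \<Longrightarrow> bm (\<lambda>t. f t - g t)"
proof -
  assume "bm f" "bm g"
  then obtain B1 B2 where m: "f \<in> borel_measurable mu" "g \<in> borel_measurable mu"
    and b: "AE t in mu. cmod (f t) \<le> B1" "AE t in mu. cmod (g t) \<le> B2"
    unfolding bm_def by blast
  have "AE t in mu. cmod (f t - g t) \<le> B1 + B2"
    using b(1) b(2) by eventually_elim (meson add_mono norm_triangle_ineq4 order_trans)
  moreover have "(\<lambda>t. f t - g t) \<in> borel_measurable mu" using m by measurable
  ultimately show ?thesis unfolding bm_def by blast
qed

lemma bm_sum: "(\<And>k. k \<in> K \<Longrightarrow> bm (f k)) \<Longrightarrow> bm (\<lambda>t. \<Sum>k\<in>K. f k t)"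
proof (induction K rule: infinite_finite_induct)
  case (infinite A) then show ?case by (simp add: bm_const)
next
  case empty then show ?case by (simp add: bm_const)
next
  case (insert x F) then show ?case by (simp add: bm_add)
qed

definition fc :: "(real \<Rightarrow> complex) \<Rightarrow> int \<Rightarrow> complex" where
  "fc g n = complex_of_real (1 / (2*pi)) * integral\<^sup>L mu (\<lambda>t. g t * cis (- (of_int n * t)))"

lemma fc_int: "integral\<^sup>L mu (\<lambda>t. g t * cis (- (of_int n * t))) = of_real (2*pi) * fc g n"
  by (simp add: fc_def)

lemma cis_int_meas: "bm (\<lambda>t. cis (of_int k * t))"
  by (rule bm_cis)

lemma sq_cnj: "z * cnj z = (complex_of_real (cmod z))\<^sup>2"
  by (metis complex_norm_square of_real_power)

lemma trig_parseval:
  assumes K: "finite K"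
  shows "integral\<^sup>L mu (\<lambda>t. (\<Sum>k\<in>K. d k * cis (of_int k * t)) * cnj (\<Sum>k\<in>K. d k * cis (of_int k * t)))
         = of_real (2*pi * (\<Sum>k\<in>K. (cmod (d k))\<^sup>2))"
proof -
  have pt: "(\<Sum>k\<in>K. d k * cis (of_int k * t)) * cnj (\<Sum>k\<in>K. d k * cis (of_int k * t))
      = (\<Sum>k\<in>K. \<Sum>l\<in>K. (d k * cnj (d l)) * cis (of_int (k - l) * t))" for t
    by (simp add: sum_product cis_cnj cis_mult algebra_simps)
  have ii: "integrable mu (\<lambda>t. cis (of_int j * t))" for j
    by (rule bm_integrable[OF bm_cis])
  have "integral\<^sup>L mu (\<lambda>t. (\<Sum>k\<in>K. d k * cis (of_int k * t)) * cnj (\<Sum>k\<in>K. d k * cis (of_int k * t)))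
     = (\<Sum>k\<in>K. \<Sum>l\<in>K. (d k * cnj (d l)) * integral\<^sup>L mu (\<lambda>t. cis (of_int (k - l) * t)))"
  proof -
    have "integral\<^sup>L mu (\<lambda>t. \<Sum>k\<in>K. \<Sum>l\<in>K. (d k * cnj (d l)) * cis (of_int (k - l) * t))
       = (\<Sum>k\<in>K. integral\<^sup>L mu (\<lambda>t. \<Sum>l\<in>K. (d k * cnj (d l)) * cis (of_int (k - l) * t)))"
      by (rule Bochner_Integration.integral_sum) (intro bm_integrable bm_sum bm_mult bm_const bm_cis)
    also have "\<dots> = (\<Sum>k\<in>K. \<Sum>l\<in>K. integral\<^sup>L mu (\<lambda>t. (d k * cnj (d l)) * cis (of_int (k - l) * t)))"
      by (intro sum.cong refl Bochner_Integration.integral_sum) (intro bm_integrable bm_sum bm_mult bm_const bm_cis)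
    finally show ?thesis unfolding pt by (simp add: integral_mult_right_zero)
  qed
  also have "\<dots> = (\<Sum>k\<in>K. \<Sum>l\<in>K. if l = k then (d k * cnj (d l)) * of_real (2*pi) else 0)"
    unfolding int_cis by (intro sum.cong refl) auto
  also have "\<dots> = (\<Sum>k\<in>K. of_real (2*pi * (cmod (d k))\<^sup>2))"
    using K by (simp add: sq_cnj mult.commute)
  finally show ?thesis by (simp add: sum_distrib_left)
qed

lemma bessel:
  assumes g: "bm g" and K: "finite K"
  shows "(\<Sum>k\<in>K. (cmod (fc g k))\<^sup>2) \<le> (1/(2*pi)) * integral\<^sup>L mu (\<lambda>t. (cmod (g t))\<^sup>2)"
proof -
  define c where "c = fc g"
  define s where "s t = (\<Sum>k\<in>K. c k * cis (of_int k * t))" for t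
  define S where "S = (\<Sum>k\<in>K. (cmod (c k))\<^sup>2)"
  have bs: "bm s" unfolding s_def by (intro bm_sum bm_mult bm_const bm_cis)
  have bgk: "bm (\<lambda>t. g t * cis (- (of_int k * t)))" for k
    using bm_mult[OF g bm_cis[of "- of_int k"]] by simp
  have I1: "integral\<^sup>L mu (\<lambda>t. g t * cnj (s t)) = of_real (2*pi*S)"
  proof -
    have pt: "g t * cnj (s t) = (\<Sum>k\<in>K. cnj (c k) * (g t * cis (- (of_int k * t))))" for t
      unfolding s_def by (simp add: cis_cnj sum_distrib_left algebra_simps)
    have "integral\<^sup>L mu (\<lambda>t. g t * cnj (s t)) = (\<Sum>k\<in>K. integral\<^sup>L mu (\<lambda>t. cnj (c k) * (g t * cis (- (of_int k * t)))))"
      unfolding pt by (rule Bochner_Integration.integral_sum) (intro bm_integrable bm_mult bm_const bgk)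
    also have "\<dots> = (\<Sum>k\<in>K. cnj (c k) * (of_real (2*pi) * c k))"
      by (simp add: integral_mult_right_zero fc_int c_def)
    also have "\<dots> = of_real (2*pi*S)"
      unfolding S_def of_real_mult of_real_sum sum_distrib_left complex_norm_square
      by (simp add: algebra_simps)
    finally show ?thesis .
  qed
  have I3: "integral\<^sup>L mu (\<lambda>t. s t * cnj (g t)) = of_real (2*pi*S)"
  proof -
    have "integral\<^sup>L mu (\<lambda>t. s t * cnj (g t)) = integral\<^sup>L mu (\<lambda>t. cnj (g t * cnj (s t)))"
      by (simp add: mult.commute)
    also have "\<dots> = of_real (2*pi*S)" by (simp only: Bochner_Integration.integral_cnj I1) simp
    finally show ?thesis .
  qed
  have I2: "integral\<^sup>L mu (\<lambda>t. s t * cnj (s t)) = of_real (2*pi*S)"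
    unfolding s_def S_def by (rule trig_parseval[OF K])
  have bgg: "bm (\<lambda>t. g t * cnj (g t))" by (intro bm_mult bm_cnj g)
  have bgs: "bm (\<lambda>t. g t * cnj (s t))" by (intro bm_mult bm_cnj g bs)
  have bsg: "bm (\<lambda>t. s t * cnj (g t))" by (intro bm_mult bm_cnj g bs)
  have bss: "bm (\<lambda>t. s t * cnj (s t))" by (intro bm_mult bm_cnj g bs)
  have pt2: "complex_of_real ((cmod (g t - s t))\<^sup>2) = g t * cnj (g t) - g t * cnj (s t) - s t * cnj (g t) + s t * cnj (s t)" for t
    unfolding complex_norm_square by (simp add: algebra_simps)
  have "complex_of_real (integral\<^sup>L mu (\<lambda>t. (cmod (g t - s t))\<^sup>2))
      = integral\<^sup>L mu (\<lambda>t. g t * cnj (g t) - g t * cnj (s t) - s t * cnj (g t) + s t * cnj (s t))"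
    by (simp only: integral_complex_of_real[symmetric] pt2)
  also have "\<dots> = integral\<^sup>L mu (\<lambda>t. g t * cnj (g t)) - integral\<^sup>L mu (\<lambda>t. g t * cnj (s t))
      - integral\<^sup>L mu (\<lambda>t. s t * cnj (g t)) + integral\<^sup>L mu (\<lambda>t. s t * cnj (s t))"
    using bm_integrable[OF bgg] bm_integrable[OF bgs] bm_integrable[OF bsg] bm_integrable[OF bss]
    by (simp add: Bochner_Integration.integral_add Bochner_Integration.integral_diff)
  also have "integral\<^sup>L mu (\<lambda>t. g t * cnj (g t)) = complex_of_real (integral\<^sup>L mu (\<lambda>t. (cmod (g t))\<^sup>2))"
    by (simp only: integral_complex_of_real[symmetric] complex_norm_square)
  finally have "complex_of_real (integral\<^sup>L mu (\<lambda>t. (cmod (g t - s t))\<^sup>2)) = complex_of_real (integral\<^sup>L mu (\<lambda>t. (cmod (g t))\<^sup>2) - 2*pi*S)"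
    unfolding I1 I2 I3 by simp
  then have "integral\<^sup>L mu (\<lambda>t. (cmod (g t - s t))\<^sup>2) = integral\<^sup>L mu (\<lambda>t. (cmod (g t))\<^sup>2) - 2*pi*S"
    by (simp only: of_real_eq_iff)
  moreover have "0 \<le> integral\<^sup>L mu (\<lambda>t. (cmod (g t - s t))\<^sup>2)"
    by (rule Bochner_Integration.integral_nonneg) simp
  ultimately have "2*pi*S \<le> integral\<^sup>L mu (\<lambda>t. (cmod (g t))\<^sup>2)" by simp
  then show ?thesis unfolding S_def c_def by (simp add: field_simps)
qed




lemma p_reindex: "(\<Sum>m<N. c m * cis (of_nat m * t)) = (\<Sum>k\<in>int ` {..<N}. c (nat k) * cis (of_int k * t))"
  by (subst sum.reindex) (auto simp: inj_on_def)

lemma p_norm: "integral\<^sup>L mu (\<lambda>t. (cmod (\<Sum>m<N. c m * cis (of_nat m * t)))\<^sup>2) = 2*pi * (\<Sum>m<N. (cmod (c m))\<^sup>2)"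
proof -
  have "complex_of_real (integral\<^sup>L mu (\<lambda>t. (cmod (\<Sum>m<N. c m * cis (of_nat m * t)))\<^sup>2))
     = integral\<^sup>L mu (\<lambda>t. (\<Sum>m<N. c m * cis (of_nat m * t)) * cnj (\<Sum>m<N. c m * cis (of_nat m * t)))"
    by (simp only: integral_complex_of_real[symmetric] complex_norm_square)
  also have "\<dots> = of_real (2*pi * (\<Sum>k\<in>int ` {..<N}. (cmod (c (nat k)))\<^sup>2))"
    unfolding p_reindex by (rule trig_parseval) simp
  also have "(\<Sum>k\<in>int ` {..<N}. (cmod (c (nat k)))\<^sup>2) = (\<Sum>m<N. (cmod (c m))\<^sup>2)"
    by (subst sum.reindex) (auto simp: inj_on_def)
  finally show ?thesis by (simp only: of_real_eq_iff)
qed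

lemma cs:
  assumes x: "x \<in> H2" and y: "y \<in> H2"
  shows "cmod (h2_inner x y) \<le> sqrt (S2 x) * sqrt (S2 y)"
proof -
  have xs: "summable (\<lambda>n. (cmod (x n))\<^sup>2)" and ys: "summable (\<lambda>n. (cmod (y n))\<^sup>2)"
    using x y by (auto simp: H2_iff)
  have nx: "0 \<le> S2 x" by (rule suminf_nonneg[OF xs]) simp
  have sn: "summable (\<lambda>n. cmod (x n * cnj (y n)))"
    by (rule summable_prod_sq) (use xs ys in auto)
  have "cmod (h2_inner x y) \<le> (\<Sum>n. cmod (x n * cnj (y n)))"
    unfolding h2_inner_def by (rule summable_norm[OF sn])
  also have "\<dots> \<le> sqrt (S2 x) * sqrt (S2 y)"
  proof (rule suminf_le_const[OF sn])
    fix L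
    have "(\<Sum>n<L. cmod (x n * cnj (y n))) = (\<Sum>n<L. \<bar>cmod (x n)\<bar> * \<bar>cmod (y n)\<bar>)"
      by (simp add: norm_mult)
    also have "\<dots> \<le> L2_set (\<lambda>n. cmod (x n)) {..<L} * L2_set (\<lambda>n. cmod (y n)) {..<L}"
      by (rule L2_set_mult_ineq)
    also have "\<dots> \<le> sqrt (S2 x) * sqrt (S2 y)"
    proof -
      have "(\<Sum>n<L. (cmod (x n))\<^sup>2) \<le> S2 x" by (rule sum_le_suminf[OF xs]) auto
      moreover have "(\<Sum>n<L. (cmod (y n))\<^sup>2) \<le> S2 y" by (rule sum_le_suminf[OF ys]) auto
      ultimately show ?thesis unfolding L2_set_def
        using nx by (intro mult_mono real_sqrt_le_mono) (auto intro: sum_nonneg)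
    qed
    finally show "(\<Sum>n<L. cmod (x n * cnj (y n))) \<le> sqrt (S2 x) * sqrt (S2 y)" .
  qed
  finally show ?thesis .
qed

definition ttr :: "nat \<Rightarrow> (nat \<Rightarrow> complex) \<Rightarrow> nat \<Rightarrow> complex" where
  "ttr N f = (\<lambda>m. if m < N then f m else 0)"
definition ttl :: "nat \<Rightarrow> (nat \<Rightarrow> complex) \<Rightarrow> nat \<Rightarrow> complex" where
  "ttl N f = (\<lambda>m. if m < N then 0 else f m)"

lemma ttr_H2: "f \<in> H2 \<Longrightarrow> ttr N f \<in> H2"
  by (rule H2_dom) (auto simp: ttr_def)
lemma ttl_H2: "f \<in> H2 \<Longrightarrow> ttl N f \<in> H2"
  by (rule H2_dom) (auto simp: ttl_def)

lemma S2_tl: assumes f: "f \<in> H2" shows "S2 (ttl N f) = S2 f - (\<Sum>m<N. (cmod (f m))\<^sup>2)"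
proof -
  have fs: "summable (\<lambda>n. (cmod (f n))\<^sup>2)" using f by (simp add: H2_iff)
  have ts: "summable (\<lambda>n. (cmod (ttl N f n))\<^sup>2)" using ttl_H2[OF f] by (simp add: H2_iff)
  have rs: "summable (\<lambda>n. (cmod (ttr N f n))\<^sup>2)" using ttr_H2[OF f] by (simp add: H2_iff)
  have "S2 f = (\<Sum>n. (cmod (ttr N f n))\<^sup>2 + (cmod (ttl N f n))\<^sup>2)"
    by (rule suminf_cong) (auto simp: ttr_def ttl_def)
  also have "\<dots> = S2 (ttr N f) + S2 (ttl N f)" by (rule suminf_add[OF rs ts, symmetric])
  also have "S2 (ttr N f) = (\<Sum>m\<in>{..<N}. (cmod (ttr N f m))\<^sup>2)"
    by (rule suminf_finite) (auto simp: ttr_def)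
  also have "\<dots> = (\<Sum>m<N. (cmod (f m))\<^sup>2)" by (simp add: ttr_def)
  finally show ?thesis by simp
qed

lemma S2_tl_lim: "f \<in> H2 \<Longrightarrow> (\<lambda>N. S2 (ttl N f)) \<longlonglongrightarrow> 0"
proof -
  assume f: "f \<in> H2"
  have fs: "summable (\<lambda>n. (cmod (f n))\<^sup>2)" using f by (simp add: H2_iff)
  have "(\<lambda>N. S2 f - (\<Sum>m<N. (cmod (f m))\<^sup>2)) \<longlonglongrightarrow> S2 f - S2 f"
    by (intro tendsto_diff tendsto_const summable_LIMSEQ fs)
  then show ?thesis by (simp add: S2_tl[OF f])
qed

locale symb =
  fixes F :: "real \<Rightarrow> complex" and B :: real
  assumes bmF: "bm F" and bnd: "AE t in mu. cmod (F t) \<le> B" and B0: "0 \<le> B"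
begin

lemma fc_prod: "fc (\<lambda>t. F t * (\<Sum>m<N. c m * cis (of_nat m * t))) n = (\<Sum>m<N. c m * fc F (n - int m))"
proof -
  have pt: "F t * (\<Sum>m<N. c m * cis (of_nat m * t)) * cis (- (of_int n * t))
     = (\<Sum>m<N. c m * (F t * cis (- (of_int (n - int m) * t))))" for t
  proof -
    have "cis (of_nat m * t) * cis (- (of_int n * t)) = cis (- (of_int (n - int m) * t))" for m
      by (simp add: cis_mult algebra_simps)
    then show ?thesis by (simp add: sum_distrib_left sum_distrib_right algebra_simps)
  qed
  have bk: "bm (\<lambda>t. F t * cis (- (of_int k * t)))" for k
    using bm_mult[OF bmF bm_cis[of "- of_int k"]] by simp
  have "integral\<^sup>L mu (\<lambda>t. F t * (\<Sum>m<N. c m * cis (of_nat m * t)) * cis (- (of_int n * t)))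
      = (\<Sum>m<N. integral\<^sup>L mu (\<lambda>t. c m * (F t * cis (- (of_int (n - int m) * t)))))"
    unfolding pt by (rule Bochner_Integration.integral_sum) (intro bm_integrable bm_mult bm_const bk)
  also have "\<dots> = (\<Sum>m<N. c m * integral\<^sup>L mu (\<lambda>t. F t * cis (- (of_int (n - int m) * t))))"
    by (simp only: integral_mult_right_zero)
  finally have I: "integral\<^sup>L mu (\<lambda>t. F t * (\<Sum>m<N. c m * cis (of_nat m * t)) * cis (- (of_int n * t)))
     = (\<Sum>m<N. c m * integral\<^sup>L mu (\<lambda>t. F t * cis (- (of_int (n - int m) * t))))" .
  show ?thesis unfolding fc_def I by (simp add: sum_distrib_left algebra_simps)
qed

lemma fin_bound:
  assumes K: "finite K"
  shows "(\<Sum>k\<in>K. (cmod (\<Sum>m<N. fc F (k - int m) * c m))\<^sup>2) \<le> B\<^sup>2 * (\<Sum>m<N. (cmod (c m))\<^sup>2)"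
proof -
  define p where "p t = (\<Sum>m<N. c m * cis (of_nat m * t))" for t
  have bp: "bm p" unfolding p_def by (intro bm_sum bm_mult bm_const bm_cis)
  have bg: "bm (\<lambda>t. F t * p t)" by (intro bm_mult bmF bp)
  have "(\<Sum>k\<in>K. (cmod (\<Sum>m<N. fc F (k - int m) * c m))\<^sup>2) = (\<Sum>k\<in>K. (cmod (fc (\<lambda>t. F t * p t) k))\<^sup>2)"
    unfolding p_def fc_prod by (simp add: mult.commute)
  also have "\<dots> \<le> (1/(2*pi)) * integral\<^sup>L mu (\<lambda>t. (cmod (F t * p t))\<^sup>2)"
    by (rule bessel[OF bg K])
  finally have s1: "(\<Sum>k\<in>K. (cmod (\<Sum>m<N. fc F (k - int m) * c m))\<^sup>2) \<le> (1/(2*pi)) * integral\<^sup>L mu (\<lambda>t. (cmod (F t * p t))\<^sup>2)" .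
  have "integral\<^sup>L mu (\<lambda>t. (cmod (F t * p t))\<^sup>2) \<le> integral\<^sup>L mu (\<lambda>t. B\<^sup>2 * (cmod (p t))\<^sup>2)"
  proof (rule integral_mono_AE)
    show "integrable mu (\<lambda>t. (cmod (F t * p t))\<^sup>2)" by (rule bm_normsq[OF bg])
    show "integrable mu (\<lambda>t. B\<^sup>2 * (cmod (p t))\<^sup>2)" by (intro integrable_mult_right bm_normsq[OF bp])
    show "AE t in mu. (cmod (F t * p t))\<^sup>2 \<le> B\<^sup>2 * (cmod (p t))\<^sup>2"
      using bnd by eventually_elim (simp add: norm_mult power_mult_distrib mult_right_mono power_mono)
  qed
  also have "integral\<^sup>L mu (\<lambda>t. B\<^sup>2 * (cmod (p t))\<^sup>2) = B\<^sup>2 * (2*pi * (\<Sum>m<N. (cmod (c m))\<^sup>2))"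
    unfolding p_def by (simp add: p_norm)
  finally have s2: "integral\<^sup>L mu (\<lambda>t. (cmod (F t * p t))\<^sup>2) \<le> B\<^sup>2 * (2*pi * (\<Sum>m<N. (cmod (c m))\<^sup>2))" .
  have "(1/(2*pi)) * integral\<^sup>L mu (\<lambda>t. (cmod (F t * p t))\<^sup>2) \<le> (1/(2*pi)) * (B\<^sup>2 * (2*pi * (\<Sum>m<N. (cmod (c m))\<^sup>2)))"
    by (rule mult_left_mono[OF s2]) simp
  with s1 show ?thesis by simp
qed

lemma sq1: "finite K \<Longrightarrow> (\<Sum>k\<in>K. (cmod (fc F k))\<^sup>2) \<le> B\<^sup>2"
  using fin_bound[of K, where N=1 and c="\<lambda>_. 1"] by simp

lemma sq2: "inj h \<Longrightarrow> summable (\<lambda>m. (cmod (fc F (h m)))\<^sup>2)"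
proof (rule summableI_nonneg_bounded)
  fix N assume "inj h"
  then have "(\<Sum>m<N. (cmod (fc F (h m)))\<^sup>2) = (\<Sum>k\<in>h ` {..<N}. (cmod (fc F k))\<^sup>2)"
    by (subst sum.reindex) (auto simp: inj_on_def inj_def)
  also have "\<dots> \<le> B\<^sup>2" by (rule sq1) simp
  finally show "(\<Sum>m<N. (cmod (fc F (h m)))\<^sup>2) \<le> B\<^sup>2" .
qed simp

lemma sq3: "summable (\<lambda>m. (cmod (x m))\<^sup>2) \<Longrightarrow> inj h \<Longrightarrow> summable (\<lambda>m. fc F (h m) * x m)"
  by (rule summable_prod_sq'[OF sq2])

lemma inj1: "inj (\<lambda>m::nat. n - int m)" by (auto simp: inj_def)
lemma inj2: "inj (\<lambda>n::nat. int n - m)" by (auto simp: inj_def)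

end

definition tmat :: "(int \<Rightarrow> complex) \<Rightarrow> (nat \<Rightarrow> complex) \<Rightarrow> nat \<Rightarrow> complex" where
  "tmat a f = (\<lambda>n. \<Sum>m. a (int n - int m) * f m)"

context symb begin

lemma tsum: "f \<in> H2 \<Longrightarrow> summable (\<lambda>m. fc F (int n - int m) * f m)"
  by (rule sq3[OF _ inj1]) (simp add: H2_iff)

lemma bound:
  assumes f: "f \<in> H2"
  shows "tmat (fc F) f \<in> H2" "S2 (tmat (fc F) f) \<le> B\<^sup>2 * S2 f"
proof -
  have fs: "summable (\<lambda>m. (cmod (f m))\<^sup>2)" using f by (simp add: H2_iff)
  have lim: "(\<lambda>N. \<Sum>m<N. fc F (int n - int m) * f m) \<longlonglongrightarrow> tmat (fc F) f n" for n
    unfolding tmat_def by (rule summable_LIMSEQ[OF tsum[OF f]])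
  have part: "(\<Sum>n<L. (cmod (tmat (fc F) f n))\<^sup>2) \<le> B\<^sup>2 * S2 f" for L
  proof (rule LIMSEQ_le_const2)
    show "(\<lambda>N. \<Sum>n<L. (cmod (\<Sum>m<N. fc F (int n - int m) * f m))\<^sup>2) \<longlonglongrightarrow> (\<Sum>n<L. (cmod (tmat (fc F) f n))\<^sup>2)"
      by (intro tendsto_sum tendsto_power tendsto_norm lim)
    show "\<exists>N0. \<forall>N\<ge>N0. (\<Sum>n<L. (cmod (\<Sum>m<N. fc F (int n - int m) * f m))\<^sup>2) \<le> B\<^sup>2 * S2 f"
    proof (intro exI allI impI)
      fix N :: nat
      have "(\<Sum>n<L. (cmod (\<Sum>m<N. fc F (int n - int m) * f m))\<^sup>2)
          = (\<Sum>k\<in>int ` {..<L}. (cmod (\<Sum>m<N. fc F (k - int m) * f m))\<^sup>2)"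
        by (subst sum.reindex) (auto simp: inj_on_def)
      also have "\<dots> \<le> B\<^sup>2 * (\<Sum>m<N. (cmod (f m))\<^sup>2)" by (rule fin_bound) simp
      also have "\<dots> \<le> B\<^sup>2 * S2 f"
        by (intro mult_left_mono sum_le_suminf fs) auto
      finally show "(\<Sum>n<L. (cmod (\<Sum>m<N. fc F (int n - int m) * f m))\<^sup>2) \<le> B\<^sup>2 * S2 f" .
    qed
  qed
  have sm: "summable (\<lambda>n. (cmod (tmat (fc F) f n))\<^sup>2)"
    by (rule summableI_nonneg_bounded[OF _ part]) simp
  then show "tmat (fc F) f \<in> H2" by (simp add: H2_iff)
  show "S2 (tmat (fc F) f) \<le> B\<^sup>2 * S2 f" by (rule suminf_le_const[OF sm part])
qed

lemma T_ttr: "tmat (fc F) (ttr N f) n = (\<Sum>m<N. fc F (int n - int m) * f m)"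
proof -
  have "tmat (fc F) (ttr N f) n = (\<Sum>m\<in>{..<N}. fc F (int n - int m) * ttr N f m)"
    unfolding tmat_def by (rule suminf_finite) (auto simp: ttr_def)
  then show ?thesis by (simp add: ttr_def)
qed

lemma T_split: "f \<in> H2 \<Longrightarrow> tmat (fc F) f n = tmat (fc F) (ttr N f) n + tmat (fc F) (ttl N f) n"
proof -
  assume f: "f \<in> H2"
  have "tmat (fc F) f n = (\<Sum>m. fc F (int n - int m) * ttr N f m + fc F (int n - int m) * ttl N f m)"
    unfolding tmat_def by (rule suminf_cong) (auto simp: ttr_def ttl_def)
  also have "\<dots> = tmat (fc F) (ttr N f) n + tmat (fc F) (ttl N f) n"
    unfolding tmat_def by (rule suminf_add[symmetric, OF tsum[OF ttr_H2[OF f]] tsum[OF ttl_H2[OF f]]])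
  finally show ?thesis .
qed

end

lemma fc_cnj: "fc (\<lambda>t. cnj (F t)) k = cnj (fc F (-k))"
  unfolding fc_def by (simp add: cis_cnj flip: Bochner_Integration.integral_cnj)

lemma symb_cnj: "symb F B \<Longrightarrow> symb (\<lambda>t. cnj (F t)) B"
  unfolding symb_def by (auto intro: bm_cnj)

context symb begin

lemma adjoint:
  assumes f: "f \<in> H2" and g: "g \<in> H2"
  shows "h2_inner (tmat (fc F) f) g = h2_inner f (tmat (fc (\<lambda>t. cnj (F t))) g)"
proof -
  interpret c: symb "\<lambda>t. cnj (F t)" B by (rule symb_cnj) (rule symb_axioms)
  define T where "T = tmat (fc F)"
  define T' where "T' = tmat (fc (\<lambda>t. cnj (F t)))"
  have cg: "(\<lambda>n. cnj (g n)) \<in> H2" using g by (simp add: H2_iff)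
  have gs: "summable (\<lambda>n. (cmod (cnj (g n)))\<^sup>2)" using g by (simp add: H2_iff)
  have sm: "summable (\<lambda>n. fc F (int n - int m) * cnj (g n))" for m
    by (rule sq3[OF gs inj2])
  have cT': "cnj (T' g m) = (\<Sum>n. fc F (int n - int m) * cnj (g n))" for m
  proof -
    have "cnj (T' g m) = (\<Sum>n. cnj (fc (\<lambda>t. cnj (F t)) (int m - int n) * g n))"
      unfolding T'_def tmat_def by (rule suminf_cnj[OF c.tsum[OF g]])
    also have "\<dots> = (\<Sum>n. fc F (int n - int m) * cnj (g n))"
      by (simp add: fc_cnj)
    finally show ?thesis .
  qed
  have step3: "h2_inner (T (ttr N f)) g = (\<Sum>m<N. f m * cnj (T' g m))" for N
  proof -
    have "h2_inner (T (ttr N f)) g = (\<Sum>n. \<Sum>m<N. f m * (fc F (int n - int m) * cnj (g n)))"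
      unfolding h2_inner_def T_def T_ttr by (simp add: sum_distrib_left sum_distrib_right ac_simps)
    also have "\<dots> = (\<Sum>m<N. \<Sum>n. f m * (fc F (int n - int m) * cnj (g n)))"
      by (rule suminf_sum) (intro summable_mult sm)
    also have "\<dots> = (\<Sum>m<N. f m * cnj (T' g m))"
      unfolding cT' by (simp add: suminf_mult[OF sm])
    finally show ?thesis .
  qed
  have step2: "h2_inner (T f) g = h2_inner (T (ttr N f)) g + h2_inner (T (ttl N f)) g" for N
  proof -
    have "h2_inner (T f) g = (\<Sum>n. T (ttr N f) n * cnj (g n) + T (ttl N f) n * cnj (g n))"
      unfolding h2_inner_def T_def by (rule suminf_cong) (simp add: T_split[OF f, of _ N] algebra_simps)
    also have "\<dots> = h2_inner (T (ttr N f)) g + h2_inner (T (ttl N f)) g"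
      unfolding h2_inner_def T_def
      by (rule suminf_add[symmetric]; rule inner_summable[OF _ g]; rule bound(1); intro ttr_H2 ttl_H2 f)
    finally show ?thesis .
  qed
  have step4: "(\<lambda>N. h2_inner (T (ttl N f)) g) \<longlonglongrightarrow> 0"
  proof (rule Lim_null_comparison)
    show "\<forall>\<^sub>F N in sequentially. norm (h2_inner (T (ttl N f)) g) \<le> B * sqrt (S2 (ttl N f)) * sqrt (S2 g)"
    proof (intro always_eventually allI)
      fix N
      have a: "norm (h2_inner (T (ttl N f)) g) \<le> sqrt (S2 (T (ttl N f))) * sqrt (S2 g)"
        unfolding T_def by (rule cs[OF bound(1)[OF ttl_H2[OF f]] g])
      have "sqrt (S2 (T (ttl N f))) \<le> sqrt (B\<^sup>2 * S2 (ttl N f))"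
        unfolding T_def by (rule real_sqrt_le_mono[OF bound(2)[OF ttl_H2[OF f]]])
      also have "sqrt (B\<^sup>2 * S2 (ttl N f)) = B * sqrt (S2 (ttl N f))"
        using B0 by (simp add: real_sqrt_mult)
      finally have b: "sqrt (S2 (T (ttl N f))) \<le> B * sqrt (S2 (ttl N f))" .
      show "norm (h2_inner (T (ttl N f)) g) \<le> B * sqrt (S2 (ttl N f)) * sqrt (S2 g)"
        by (rule order_trans[OF a mult_right_mono[OF b]]) (rule real_sqrt_ge_zero, rule suminf_nonneg, use g in \<open>auto simp: H2_iff\<close>)
    qed
    have "(\<lambda>N. B * sqrt (S2 (ttl N f)) * sqrt (S2 g)) \<longlonglongrightarrow> B * sqrt 0 * sqrt (S2 g)"
      by (intro tendsto_mult tendsto_const tendsto_real_sqrt S2_tl_lim f)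
    then show "(\<lambda>N. B * sqrt (S2 (ttl N f)) * sqrt (S2 g)) \<longlonglongrightarrow> 0" by simp
  qed
  have l1: "(\<lambda>N. \<Sum>m<N. f m * cnj (T' g m)) \<longlonglongrightarrow> h2_inner (T f) g"
  proof -
    have "(\<lambda>N. h2_inner (T f) g - h2_inner (T (ttl N f)) g) \<longlonglongrightarrow> h2_inner (T f) g - 0"
      by (intro tendsto_diff tendsto_const step4)
    moreover have "h2_inner (T f) g - h2_inner (T (ttl N f)) g = (\<Sum>m<N. f m * cnj (T' g m))" for N
      using step2[of N] step3[of N] by simp
    ultimately show ?thesis by simp
  qed
  have l2: "(\<lambda>N. \<Sum>m<N. f m * cnj (T' g m)) \<longlonglongrightarrow> h2_inner f (T' g)"
    unfolding h2_inner_def T'_def by (rule summable_LIMSEQ[OF inner_summable[OF f c.bound(1)[OF g]]])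
  show ?thesis using LIMSEQ_unique[OF l1 l2] by (simp add: T_def T'_def)
qed

end



theorem corollary5p4:
  fixes \<phi> :: "complex \<Rightarrow> complex"
    and C U :: "(nat \<Rightarrow> complex) \<Rightarrow> nat \<Rightarrow> complex"
  assumes phi: "Linfty_T \<phi>"
    and C: "conjugation C"
    and U: "unitary_H2 U"
    and fact: "\<forall>f\<in>H2. C f = U (J_H2 f)"
  defines "u \<equiv> (\<lambda>i j. h2_inner (U (zmono i)) (zmono j))"
  shows "(C_symmetric C (toeplitz \<phi>)
            \<longleftrightarrow> (\<forall>m n. fourier_coeff \<phi> (int m - int n)
                     = h2_inner (adj_H2 U (toeplitz \<phi> (U (zmono m)))) (zmono n)))
       \<and> ((\<forall>m n. fourier_coeff \<phi> (int m - int n)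
                     = h2_inner (adj_H2 U (toeplitz \<phi> (U (zmono m)))) (zmono n))
            \<longleftrightarrow> (\<forall>m n. fourier_coeff \<phi> (int m - int n)
                     = (\<Sum>i. \<Sum>j. u m j * fourier_coeff \<phi> (int i - int j) * cnj (u i n))))"
proof -
  define F where "F t = \<phi> (cis t)" for t
  obtain B0 where meas: "F \<in> borel_measurable mu" and Bb: "AE t in mu. cmod (F t) \<le> B0"
    using phi unfolding Linfty_T_def F_def by blast
  define B where "B = \<bar>B0\<bar>"
  have sF: "symb F B"
  proof
    show "AE t in mu. cmod (F t) \<le> B" using Bb by eventually_elim (simp add: B_def)
    then show "bm F" using meas unfolding bm_def by blast
    show "0 \<le> B" by (simp add: B_def)
  qed
  interpret s: symb F B by (rule sF)
  interpret c: symb "\<lambda>t. cnj (F t)" B by (rule symb_cnj[OF sF])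
  have fcF: "fourier_coeff \<phi> = fc F"
    by (auto simp: fun_eq_iff fourier_coeff_def fc_def F_def)
  have TT: "toeplitz \<phi> = tmat (fc F)"
    by (auto simp: fun_eq_iff toeplitz_def tmat_def fcF)
  define T where "T = tmat (fc F)"
  define T' where "T' = tmat (fc (\<lambda>t. cnj (F t)))"
  have TH2: "f \<in> H2 \<Longrightarrow> T f \<in> H2" for f unfolding T_def by (rule s.bound(1))
  have T'H2: "f \<in> H2 \<Longrightarrow> T' f \<in> H2" for f unfolding T'_def by (rule c.bound(1))
  have adjT: "adj_H2 T g = T' g" if g: "g \<in> H2" for g
    by (rule adj_eq[OF g T'H2[OF g]]) (auto simp: T_def T'_def s.adjoint g)
  have CH2: "f \<in> H2 \<Longrightarrow> C f \<in> H2" for f using C unfolding conjugation_def by blast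
  have CC: "f \<in> H2 \<Longrightarrow> C (C f) = f" for f using C unfolding conjugation_def by blast
  have Cf: "f \<in> H2 \<Longrightarrow> C f = U (J_H2 f)" for f using fact by blast
  have Cz: "C (zmono n) = U (zmono n)" for n using Cf[OF zmono_H2] by (simp add: J_zmono)
  have Cinner: "h2_inner (C p) (C q) = h2_inner q p" if "p \<in> H2" "q \<in> H2" for p q
    using that by (simp add: Cf U_inner[OF U] J_H2_in J_inner)
  have Cg: "h2_inner (C y) z = h2_inner (C z) y" if "y \<in> H2" "z \<in> H2" for y z
    using Cinner[of y "C z"] that by (simp add: CC CH2)
  have Ch: "h2_inner x (C f) = h2_inner f (C x)" if "x \<in> H2" "f \<in> H2" for x f
    using Cinner[of "C x" f] that by (simp add: CC CH2)
  have Ccoord: "C x m = h2_inner (U (zmono m)) x" if "x \<in> H2" for x m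
    using Cg[OF that zmono_H2[of m]] by (simp add: inner_zmono_right Cz)
  define v where "v n = U (zmono n)" for n
  have vH2: "v n \<in> H2" for n unfolding v_def by (rule U_H2[OF U zmono_H2])
  define Q where "Q m n = h2_inner (T (v m)) (v n)" for m n
  have E2: "h2_inner (adj_H2 U (T (v m))) (zmono n) = Q m n" for m n
    using adj_U[OF U TH2[OF vH2[of m]], of n] by (simp add: inner_zmono_right Q_def v_def)
  have K: "C (T' (C f)) n = h2_inner (T (v n)) (C f)" if f: "f \<in> H2" for f n
    using Ccoord[OF T'H2[OF CH2[OF f]], of n] s.adjoint[OF vH2 CH2[OF f], of n]
    by (simp add: T_def T'_def v_def)
  have Tz: "T (zmono m) n = fc F (int n - int m)" for m n
  proof -
    have "T (zmono m) n = (\<Sum>k\<in>{m}. fc F (int n - int k) * zmono m k)"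
      unfolding T_def tmat_def by (rule suminf_finite) (auto simp: zmono_def)
    then show ?thesis by (simp add: zmono_def)
  qed
  have part1: "C_symmetric C T \<longleftrightarrow> (\<forall>m n. fc F (int m - int n) = Q m n)"
  proof
    assume H: "C_symmetric C T"
    show "\<forall>m n. fc F (int m - int n) = Q m n"
    proof (intro allI)
      fix m n
      have "C (T' (C (zmono n))) = T (zmono n)"
        using H zmono_H2[of n] unfolding C_symmetric_def by (simp add: adjT CH2)
      then have "C (T' (C (zmono n))) m = T (zmono n) m" by simp
      then show "fc F (int m - int n) = Q m n"
        using K[OF zmono_H2[of n], of m] by (simp add: Tz Q_def Cz v_def)
    qed
  next
    assume H: "\<forall>m n. fc F (int m - int n) = Q m n"
    show "C_symmetric C T" unfolding C_symmetric_def
    proof (intro ballI)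
      fix f assume f: "f \<in> H2"
      show "C (adj_H2 T (C f)) = T f"
      proof
        fix n
        have "C (adj_H2 T (C f)) n = h2_inner (T (v n)) (C f)"
          using K[OF f] by (simp add: adjT CH2 f)
        also have "\<dots> = h2_inner f (C (T (v n)))" by (rule Ch[OF TH2[OF vH2] f])
        also have "\<dots> = (\<Sum>m. f m * cnj (C (T (v n)) m))" by (simp add: h2_inner_def)
        also have "\<dots> = (\<Sum>m. fc F (int n - int m) * f m)"
        proof (rule suminf_cong)
          fix m
          have "cnj (C (T (v n)) m) = cnj (h2_inner (v m) (T (v n)))"
            using Ccoord[OF TH2[OF vH2[of n]], of m] by (simp add: v_def)
          also have "\<dots> = Q n m" unfolding Q_def by (rule inner_cnj[OF vH2 TH2[OF vH2], symmetric])
          finally show "f m * cnj (C (T (v n)) m) = fc F (int n - int m) * f m"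
            using H by simp
        qed
        also have "\<dots> = T f n" by (simp add: T_def tmat_def)
        finally show "C (adj_H2 T (C f)) n = T f n" .
      qed
    qed
  qed
  have uv: "u i j = v i j" for i j by (simp add: u_def v_def inner_zmono_right)
  have UJv: "U (J_H2 (v n)) = zmono n" for n
    using CC[OF zmono_H2[of n]] Cf[OF vH2[of n]] by (simp add: Cz v_def)
  have usym: "u i n = u n i" for i n
  proof -
    have "u i n = h2_inner (v i) (U (J_H2 (v n)))" by (simp add: u_def v_def UJv[unfolded v_def])
    also have "\<dots> = h2_inner (zmono i) (J_H2 (v n))"
      unfolding v_def by (rule U_inner[OF U zmono_H2 J_H2_in[OF vH2[unfolded v_def]]])
    also have "\<dots> = u n i" by (simp add: inner_zmono_left J_H2_def uv)
    finally show ?thesis .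
  qed
  have QR: "Q m n = (\<Sum>i. \<Sum>j. u m j * fc F (int i - int j) * cnj (u i n))" for m n
  proof -
    have "Q m n = (\<Sum>i. (\<Sum>j. fc F (int i - int j) * v m j) * cnj (u i n))"
      unfolding Q_def h2_inner_def T_def tmat_def by (intro suminf_cong) (metis uv usym)
    also have "\<dots> = (\<Sum>i. \<Sum>j. u m j * fc F (int i - int j) * cnj (u i n))"
    proof (rule suminf_cong)
      fix i
      show "(\<Sum>j. fc F (int i - int j) * v m j) * cnj (u i n) = (\<Sum>j. u m j * fc F (int i - int j) * cnj (u i n))"
        by (subst suminf_mult2[OF s.tsum[OF vH2]]) (simp add: uv mult.commute)
    qed
    finally show ?thesis .
  qed
  show ?thesis
    unfolding TT fcF T_def[symmetric]
    using part1 E2 QR by (simp add: v_def)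
qed


end
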